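(* Let $(R,+,\cdot)$ be a finite simple additively idempotent semiring with $|R|>2$. Then there exists a finite idempotent irreducible $R$-semimodule.
   Context: A semiring is a nonempty set with a commutative semigroup operation $+$ and a semigroup operation $\cdot$ satisfying both distributive laws; simple if its only congruences are the identity and the full relation; additively idempotent if $r+r=r$ for all $r$. An $R$-semimodule is a commutative semigroup $(M,+)$ with an action $R\times M\to M$ satisfying $r(sx)=(rs)x$, $(r+s)x=rx+sx$, $r(x+y)=rx+ry$; it is idempotent if $x+x=x$. A subsemimodule is a subsemigroup closed under the action; a semimodule congruence is an equivalence compatible with $+$ and the action. $M$ is quasitrivial if $rx=sx$ for all $r,s,x$; id-quasitrivial if $rx=x$ for all $r,x$. $M$ is sub-irreducible if it is not quasitrivial and all proper subsemimodules are id-quasitrivial; quotient-irreducible if not quasitrivial and its only congruences are the identity and $M\times M$; irreducible if both. *)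

theory Defs
  imports Main
begin

definition semiring :: "'a set \<Rightarrow> ('a \<Rightarrow> 'a \<Rightarrow> 'a) \<Rightarrow> ('a \<Rightarrow> 'a \<Rightarrow> 'a) \<Rightarrow> bool" where
  "semiring R add mul \<longleftrightarrow>
     R \<noteq> {} \<and>
     (\<forall>a\<in>R. \<forall>b\<in>R. add a b \<in> R \<and> mul a b \<in> R) \<and>
     (\<forall>a\<in>R. \<forall>b\<in>R. \<forall>c\<in>R. add (add a b) c = add a (add b c)) \<and>
     (\<forall>a\<in>R. \<forall>b\<in>R. add a b = add b a) \<and>
     (\<forall>a\<in>R. \<forall>b\<in>R. \<forall>c\<in>R. mul (mul a b) c = mul a (mul b c)) \<and>
     (\<forall>a\<in>R. \<forall>b\<in>R. \<forall>c\<in>R. mul a (add b c) = add (mul a b) (mul a c)) \<and>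
     (\<forall>a\<in>R. \<forall>b\<in>R. \<forall>c\<in>R. mul (add a b) c = add (mul a c) (mul b c))"

definition semiring_congruence ::
  "'a set \<Rightarrow> ('a \<Rightarrow> 'a \<Rightarrow> 'a) \<Rightarrow> ('a \<Rightarrow> 'a \<Rightarrow> 'a) \<Rightarrow> ('a \<times> 'a) set \<Rightarrow> bool" where
  "semiring_congruence R add mul \<theta> \<longleftrightarrow>
     equiv R \<theta> \<and>
     (\<forall>a b c d. (a, b) \<in> \<theta> \<longrightarrow> (c, d) \<in> \<theta> \<longrightarrow>
        (add a c, add b d) \<in> \<theta> \<and> (mul a c, mul b d) \<in> \<theta>)"

definition simple_semiring :: "'a set \<Rightarrow> ('a \<Rightarrow> 'a \<Rightarrow> 'a) \<Rightarrow> ('a \<Rightarrow> 'a \<Rightarrow> 'a) \<Rightarrow> bool" where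
  "simple_semiring R add mul \<longleftrightarrow>
     semiring R add mul \<and>
     (\<forall>\<theta>. semiring_congruence R add mul \<theta> \<longrightarrow> \<theta> = Id_on R \<or> \<theta> = R \<times> R)"

definition add_idempotent :: "'a set \<Rightarrow> ('a \<Rightarrow> 'a \<Rightarrow> 'a) \<Rightarrow> bool" where
  "add_idempotent R add \<longleftrightarrow> (\<forall>r\<in>R. add r r = r)"

definition semimodule ::
  "'a set \<Rightarrow> ('a \<Rightarrow> 'a \<Rightarrow> 'a) \<Rightarrow> ('a \<Rightarrow> 'a \<Rightarrow> 'a) \<Rightarrow>
   'b set \<Rightarrow> ('b \<Rightarrow> 'b \<Rightarrow> 'b) \<Rightarrow> ('a \<Rightarrow> 'b \<Rightarrow> 'b) \<Rightarrow> bool" where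
  "semimodule R add mul M madd act \<longleftrightarrow>
     M \<noteq> {} \<and>
     (\<forall>x\<in>M. \<forall>y\<in>M. madd x y \<in> M) \<and>
     (\<forall>x\<in>M. \<forall>y\<in>M. \<forall>z\<in>M. madd (madd x y) z = madd x (madd y z)) \<and>
     (\<forall>x\<in>M. \<forall>y\<in>M. madd x y = madd y x) \<and>
     (\<forall>r\<in>R. \<forall>x\<in>M. act r x \<in> M) \<and>
     (\<forall>r\<in>R. \<forall>s\<in>R. \<forall>x\<in>M. act r (act s x) = act (mul r s) x) \<and>
     (\<forall>r\<in>R. \<forall>s\<in>R. \<forall>x\<in>M. act (add r s) x = madd (act r x) (act s x)) \<and>
     (\<forall>r\<in>R. \<forall>x\<in>M. \<forall>y\<in>M. act r (madd x y) = madd (act r x) (act r y))"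

definition idempotent_semimodule :: "'b set \<Rightarrow> ('b \<Rightarrow> 'b \<Rightarrow> 'b) \<Rightarrow> bool" where
  "idempotent_semimodule M madd \<longleftrightarrow> (\<forall>x\<in>M. madd x x = x)"

definition subsemimodule ::
  "'a set \<Rightarrow> 'b set \<Rightarrow> ('b \<Rightarrow> 'b \<Rightarrow> 'b) \<Rightarrow> ('a \<Rightarrow> 'b \<Rightarrow> 'b) \<Rightarrow> 'b set \<Rightarrow> bool" where
  "subsemimodule R M madd act N \<longleftrightarrow>
     N \<subseteq> M \<and>
     (\<forall>x\<in>N. \<forall>y\<in>N. madd x y \<in> N) \<and>
     (\<forall>r\<in>R. \<forall>x\<in>N. act r x \<in> N)"

definition semimodule_congruence ::
  "'a set \<Rightarrow> 'b set \<Rightarrow> ('b \<Rightarrow> 'b \<Rightarrow> 'b) \<Rightarrow> ('a \<Rightarrow> 'b \<Rightarrow> 'b) \<Rightarrow> ('b \<times> 'b) set \<Rightarrow> bool" where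
  "semimodule_congruence R M madd act \<theta> \<longleftrightarrow>
     equiv M \<theta> \<and>
     (\<forall>x y u v. (x, y) \<in> \<theta> \<longrightarrow> (u, v) \<in> \<theta> \<longrightarrow> (madd x u, madd y v) \<in> \<theta>) \<and>
     (\<forall>r\<in>R. \<forall>x y. (x, y) \<in> \<theta> \<longrightarrow> (act r x, act r y) \<in> \<theta>)"

definition quasitrivial :: "'a set \<Rightarrow> 'b set \<Rightarrow> ('a \<Rightarrow> 'b \<Rightarrow> 'b) \<Rightarrow> bool" where
  "quasitrivial R M act \<longleftrightarrow> (\<forall>r\<in>R. \<forall>s\<in>R. \<forall>x\<in>M. act r x = act s x)"

definition id_quasitrivial :: "'a set \<Rightarrow> 'b set \<Rightarrow> ('a \<Rightarrow> 'b \<Rightarrow> 'b) \<Rightarrow> bool" where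
  "id_quasitrivial R M act \<longleftrightarrow> (\<forall>r\<in>R. \<forall>x\<in>M. act r x = x)"

definition sub_irreducible ::
  "'a set \<Rightarrow> 'b set \<Rightarrow> ('b \<Rightarrow> 'b \<Rightarrow> 'b) \<Rightarrow> ('a \<Rightarrow> 'b \<Rightarrow> 'b) \<Rightarrow> bool" where
  "sub_irreducible R M madd act \<longleftrightarrow>
     \<not> quasitrivial R M act \<and>
     (\<forall>N. subsemimodule R M madd act N \<and> N \<subset> M \<longrightarrow> id_quasitrivial R N act)"

definition quotient_irreducible ::
  "'a set \<Rightarrow> 'b set \<Rightarrow> ('b \<Rightarrow> 'b \<Rightarrow> 'b) \<Rightarrow> ('a \<Rightarrow> 'b \<Rightarrow> 'b) \<Rightarrow> bool" where
  "quotient_irreducible R M madd act \<longleftrightarrow>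
     \<not> quasitrivial R M act \<and>
     (\<forall>\<theta>. semimodule_congruence R M madd act \<theta> \<longrightarrow> \<theta> = Id_on M \<or> \<theta> = M \<times> M)"

definition irreducible_semimodule ::
  "'a set \<Rightarrow> 'b set \<Rightarrow> ('b \<Rightarrow> 'b \<Rightarrow> 'b) \<Rightarrow> ('a \<Rightarrow> 'b \<Rightarrow> 'b) \<Rightarrow> bool" where
  "irreducible_semimodule R M madd act \<longleftrightarrow>
     sub_irreducible R M madd act \<and> quotient_irreducible R M madd act"

end

theory Submission
  imports Defs
begin


lemma transport:
  fixes A :: "'b set" and B :: "'c set"
  assumes sm: "semimodule R add mul A madd act" and bij: "bij_betw g A B"
  defines "h \<equiv> inv_into A g"
  shows "semimodule R add mul B (\<lambda>x y. g (madd (h x) (h y))) (\<lambda>r x. g (act r (h x)))"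
    and "idempotent_semimodule A madd \<Longrightarrow> idempotent_semimodule B (\<lambda>x y. g (madd (h x) (h y)))"
    and "quasitrivial R B (\<lambda>r x. g (act r (h x))) \<longleftrightarrow> quasitrivial R A act"
proof -
  have inj: "inj_on g A" and im: "g ` A = B" using bij by (auto simp: bij_betw_def)
  have hA: "\<And>x. x \<in> B \<Longrightarrow> h x \<in> A" using im h_def by (auto intro: inv_into_into)
  have gh: "\<And>x. x \<in> B \<Longrightarrow> g (h x) = x" using im h_def by (auto intro: f_inv_into_f)
  have hg: "\<And>a. a \<in> A \<Longrightarrow> h (g a) = a" using inj h_def by (auto intro: inv_into_f_f)
  have gA: "\<And>a. a \<in> A \<Longrightarrow> g a \<in> B" using im by auto
  have gi: "\<And>a b. a \<in> A \<Longrightarrow> b \<in> A \<Longrightarrow> g a = g b \<longleftrightarrow> a = b" using inj by (auto dest: inj_onD)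
  from sm have Ane: "A \<noteq> {}" and c1: "\<forall>x\<in>A. \<forall>y\<in>A. madd x y \<in> A"
    and c2: "\<forall>x\<in>A. \<forall>y\<in>A. \<forall>z\<in>A. madd (madd x y) z = madd x (madd y z)"
    and c3: "\<forall>x\<in>A. \<forall>y\<in>A. madd x y = madd y x"
    and c4: "\<forall>r\<in>R. \<forall>x\<in>A. act r x \<in> A"
    and c5: "\<forall>r\<in>R. \<forall>s\<in>R. \<forall>x\<in>A. act r (act s x) = act (mul r s) x"
    and c6: "\<forall>r\<in>R. \<forall>s\<in>R. \<forall>x\<in>A. act (add r s) x = madd (act r x) (act s x)"
    and c7: "\<forall>r\<in>R. \<forall>x\<in>A. \<forall>y\<in>A. act r (madd x y) = madd (act r x) (act r y)"
    unfolding semimodule_def by auto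
  show "semimodule R add mul B (\<lambda>x y. g (madd (h x) (h y))) (\<lambda>r x. g (act r (h x)))"
    unfolding semimodule_def
    using Ane im c1 c2 c3 c4 c5 c6 c7 by (auto simp: hA gh hg gA)
  show "idempotent_semimodule A madd \<Longrightarrow> idempotent_semimodule B (\<lambda>x y. g (madd (h x) (h y)))"
    unfolding idempotent_semimodule_def by (auto simp: hA gh)
  show "quasitrivial R B (\<lambda>r x. g (act r (h x))) \<longleftrightarrow> quasitrivial R A act"
    unfolding quasitrivial_def
  proof safe
    fix r s x assume H: "\<forall>r\<in>R. \<forall>s\<in>R. \<forall>x\<in>B. g (act r (h x)) = g (act s (h x))"
      and r: "r \<in> R" and s: "s \<in> R" and x: "x \<in> A"
    have "g (act r (h (g x))) = g (act s (h (g x)))" using H[rule_format, OF r s gA[OF x]] .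
    hence "g (act r x) = g (act s x)" by (simp add: hg x)
    thus "act r x = act s x" using gi c4 r s x by auto
  next
    fix r s x assume H: "\<forall>r\<in>R. \<forall>s\<in>R. \<forall>x\<in>A. act r x = act s x"
      and r: "r \<in> R" and s: "s \<in> R" and x: "x \<in> B"
    show "g (act r (h x)) = g (act s (h x))" using H[rule_format, OF r s hA[OF x]] by simp
  qed
qed

lemma transport_nat:
  fixes A :: "'b set"
  assumes "finite A" "semimodule R add mul A madd act"
  shows "\<exists>(B::nat set) madd' act'. finite B \<and> card B = card A \<and> semimodule R add mul B madd' act'
     \<and> (idempotent_semimodule A madd \<longrightarrow> idempotent_semimodule B madd')
     \<and> (quasitrivial R B act' \<longleftrightarrow> quasitrivial R A act)"
proof -
  obtain g where bij: "bij_betw g A {0..<card A}" using ex_bij_betw_finite_nat[OF assms(1)] by blast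
  show ?thesis
    apply (rule exI[of _ "{0..<card A}"])
    apply (rule exI)+
    using transport[OF assms(2) bij] by auto
qed




lemma ball_quot: "(\<forall>X\<in>M//\<theta>. P X) \<longleftrightarrow> (\<forall>x\<in>M. P (\<theta>``{x}))"
  by (auto simp: quotient_def)

lemma quotient_module:
  fixes M :: "'b set"
  assumes sm: "semimodule R add mul M madd act" and idm: "idempotent_semimodule M madd"
    and cg: "semimodule_congruence R M madd act \<theta>"
    and clR: "\<forall>r\<in>R. \<forall>s\<in>R. add r s \<in> R \<and> mul r s \<in> R"
  defines "rep \<equiv> (\<lambda>X::'b set. SOME x. x \<in> X)"
  defines "madd' \<equiv> (\<lambda>X Y. \<theta>``{madd (rep X) (rep Y)})"
  defines "act' \<equiv> (\<lambda>r X. \<theta>``{act r (rep X)})"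
  shows "semimodule R add mul (M//\<theta>) madd' act'"
    and "idempotent_semimodule (M//\<theta>) madd'"
    and "quasitrivial R (M//\<theta>) act' \<Longrightarrow> (\<forall>r\<in>R. \<forall>s\<in>R. \<forall>x\<in>M. (act r x, act s x) \<in> \<theta>)"
proof -
  have eq: "equiv M \<theta>" using cg by (simp add: semimodule_congruence_def)
  have cA: "\<And>x y u v. (x, y) \<in> \<theta> \<Longrightarrow> (u, v) \<in> \<theta> \<Longrightarrow> (madd x u, madd y v) \<in> \<theta>"
    using cg by (simp add: semimodule_congruence_def)
  have cR: "\<And>r x y. r \<in> R \<Longrightarrow> (x, y) \<in> \<theta> \<Longrightarrow> (act r x, act r y) \<in> \<theta>"
    using cg by (simp add: semimodule_congruence_def)
  from sm have Mne: "M \<noteq> {}" and c1: "\<forall>x\<in>M. \<forall>y\<in>M. madd x y \<in> M"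
    and c2: "\<forall>x\<in>M. \<forall>y\<in>M. \<forall>z\<in>M. madd (madd x y) z = madd x (madd y z)"
    and c3: "\<forall>x\<in>M. \<forall>y\<in>M. madd x y = madd y x"
    and c4: "\<forall>r\<in>R. \<forall>x\<in>M. act r x \<in> M"
    and c5: "\<forall>r\<in>R. \<forall>s\<in>R. \<forall>x\<in>M. act r (act s x) = act (mul r s) x"
    and c6: "\<forall>r\<in>R. \<forall>s\<in>R. \<forall>x\<in>M. act (add r s) x = madd (act r x) (act s x)"
    and c7: "\<forall>r\<in>R. \<forall>x\<in>M. \<forall>y\<in>M. act r (madd x y) = madd (act r x) (act r y)"
    unfolding semimodule_def by auto
  have rep: "\<And>x. x \<in> M \<Longrightarrow> (rep (\<theta>``{x}), x) \<in> \<theta>"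
  proof -
    fix x assume x: "x \<in> M"
    have "x \<in> \<theta>``{x}" using eq x by (auto simp: equiv_def refl_on_def)
    hence "rep (\<theta>``{x}) \<in> \<theta>``{x}" unfolding rep_def by (rule someI)
    hence "(x, rep (\<theta>``{x})) \<in> \<theta>" by simp
    thus "(rep (\<theta>``{x}), x) \<in> \<theta>" using eq by (auto simp: equiv_def sym_def)
  qed
  have cls: "\<And>x y. (x, y) \<in> \<theta> \<Longrightarrow> \<theta>``{x} = \<theta>``{y}"
    using eq by (rule equiv_class_eq)
  have kA: "\<And>x y. x \<in> M \<Longrightarrow> y \<in> M \<Longrightarrow> madd' (\<theta>``{x}) (\<theta>``{y}) = \<theta>``{madd x y}"
    unfolding madd'_def by (rule cls, rule cA, rule rep, assumption, rule rep, assumption)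
  have kR: "\<And>r x. r \<in> R \<Longrightarrow> x \<in> M \<Longrightarrow> act' r (\<theta>``{x}) = \<theta>``{act r x}"
    unfolding act'_def by (rule cls, rule cR, assumption, rule rep, assumption)
  have qI: "\<And>x. x \<in> M \<Longrightarrow> \<theta>``{x} \<in> M//\<theta>" by (rule quotientI)
  show "semimodule R add mul (M//\<theta>) madd' act'"
    unfolding semimodule_def ball_quot
    using Mne c1 c2 c3 c4 c5 c6 c7 clR by (simp add: kA kR qI)
  show "idempotent_semimodule (M//\<theta>) madd'"
    using idm unfolding idempotent_semimodule_def ball_quot by (simp add: kA)
  assume q: "quasitrivial R (M//\<theta>) act'"
  show "\<forall>r\<in>R. \<forall>s\<in>R. \<forall>x\<in>M. (act r x, act s x) \<in> \<theta>"
  proof (intro ballI)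
    fix r s x assume r: "r \<in> R" and s: "s \<in> R" and x: "x \<in> M"
    have "act' r (\<theta>``{x}) = act' s (\<theta>``{x})" using q r s qI[OF x] unfolding quasitrivial_def by blast
    hence "\<theta>``{act r x} = \<theta>``{act s x}" by (simp add: kR r s x)
    thus "(act r x, act s x) \<in> \<theta>" using eq_equiv_class_iff[OF eq] c4 r s x by auto
  qed
qed

lemma quotient_card_less:
  assumes "finite M" "equiv M \<theta>" "\<theta> \<noteq> Id_on M"
  shows "card (M//\<theta>) < card M"
proof -
  have im: "M//\<theta> = (\<lambda>x. \<theta>``{x}) ` M" by (auto simp: quotient_def)
  have "\<not> inj_on (\<lambda>x. \<theta>``{x}) M"
  proof
    assume inj: "inj_on (\<lambda>x. \<theta>``{x}) M"
    have "\<theta> = Id_on M"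
    proof safe
      fix a b assume ab: "(a, b) \<in> \<theta>"
      hence "a \<in> M" "b \<in> M" using assms(2) by (auto simp: equiv_def refl_on_def)
      moreover have "\<theta>``{a} = \<theta>``{b}" using equiv_class_eq[OF assms(2) ab] .
      ultimately show "(a, b) \<in> Id_on M" using inj by (auto dest: inj_onD)
    next
      fix a assume "a \<in> M" thus "(a, a) \<in> \<theta>" using assms(2) by (auto simp: equiv_def refl_on_def)
    qed
    thus False using assms(3) by simp
  qed
  hence "card ((\<lambda>x. \<theta>``{x}) ` M) \<noteq> card M" using inj_on_iff_eq_card[OF assms(1), of "\<lambda>x. \<theta>``{x}"] by blast
  moreover have "card ((\<lambda>x. \<theta>``{x}) ` M) \<le> card M" by (rule card_image_le[OF assms(1)])
  ultimately show ?thesis using im by simp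
qed

lemma sub_module:
  assumes sm: "semimodule R add mul M madd act" and sub: "subsemimodule R M madd act N" and ne: "N \<noteq> {}"
  shows "semimodule R add mul N madd act"
proof -
  have NM: "\<And>x. x \<in> N \<Longrightarrow> x \<in> M" using sub by (auto simp: subsemimodule_def)
  show ?thesis using sm sub ne unfolding semimodule_def subsemimodule_def
    by (intro conjI; (elim conjE)?; simp add: NM)
qed




lemma three_elems:
  assumes "finite R" "card R > 2"
  obtains x1 x2 x3 where "x1 \<in> R" "x2 \<in> R" "x3 \<in> R" "x1 \<noteq> x2" "x1 \<noteq> x3" "x2 \<noteq> x3"
proof -
  from assms have "R \<noteq> {}" by auto
  then obtain x1 where x1: "x1 \<in> R" by auto
  have c1: "card (R - {x1}) > 1" using assms x1 by (simp add: card_Diff_singleton)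
  have "R - {x1} \<noteq> {}" proof assume "R - {x1} = {}" with c1 show False by simp qed
  then obtain x2 where x2: "x2 \<in> R - {x1}" by auto
  have "card (R - {x1} - {x2}) > 0" using c1 x2 assms by (simp add: card_Diff_singleton)
  hence "R - {x1} - {x2} \<noteq> {}" by (metis card.empty less_irrefl)
  then obtain x3 where x3: "x3 \<in> R - {x1} - {x2}" by auto
  show ?thesis using that x1 x2 x3 by auto
qed

context
  fixes R :: "'a set" and add mul :: "'a \<Rightarrow> 'a \<Rightarrow> 'a"
  assumes fin: "finite R" and simple: "simple_semiring R add mul"
    and idem: "add_idempotent R add" and card3: "card R > 2"
begin

lemma sr: "semiring R add mul" using simple by (simp add: simple_semiring_def)

lemma simp_cong: "semiring_congruence R add mul \<theta> \<Longrightarrow> \<theta> = Id_on R \<or> \<theta> = R \<times> R"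
  using simple by (simp add: simple_semiring_def)

lemma clA: "a \<in> R \<Longrightarrow> b \<in> R \<Longrightarrow> add a b \<in> R" using sr unfolding semiring_def by blast
lemma clM: "a \<in> R \<Longrightarrow> b \<in> R \<Longrightarrow> mul a b \<in> R" using sr unfolding semiring_def by blast
lemma aA: "a \<in> R \<Longrightarrow> b \<in> R \<Longrightarrow> c \<in> R \<Longrightarrow> add (add a b) c = add a (add b c)" using sr unfolding semiring_def by blast
lemma aC: "a \<in> R \<Longrightarrow> b \<in> R \<Longrightarrow> add a b = add b a" using sr unfolding semiring_def by blast
lemma mA: "a \<in> R \<Longrightarrow> b \<in> R \<Longrightarrow> c \<in> R \<Longrightarrow> mul (mul a b) c = mul a (mul b c)" using sr unfolding semiring_def by blast
lemma dL: "a \<in> R \<Longrightarrow> b \<in> R \<Longrightarrow> c \<in> R \<Longrightarrow> mul a (add b c) = add (mul a b) (mul a c)" using sr unfolding semiring_def by blast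
lemma dR: "a \<in> R \<Longrightarrow> b \<in> R \<Longrightarrow> c \<in> R \<Longrightarrow> mul (add a b) c = add (mul a c) (mul b c)" using sr unfolding semiring_def by blast
lemma aI: "a \<in> R \<Longrightarrow> add a a = a" using idem by (simp add: add_idempotent_def)

lemma below_add:
  assumes u: "u \<in> R" and v: "v \<in> R" and a: "a \<in> R"
  shows "add (add u v) a = a \<longleftrightarrow> add u a = a \<and> add v a = a"
proof
  assume h: "add (add u v) a = a"
  have "add u a = add u (add (add u v) a)" using h by simp
  also have "\<dots> = add (add u u) (add v a)" using u v a by (simp add: aA clA)
  also have "\<dots> = a" using u v a h by (simp add: aI aA)
  finally have 1: "add u a = a" .
  have "add v a = add v (add (add u v) a)" using h by simp
  also have "\<dots> = add (add v v) (add u a)" using u v a by (metis aA aC clA)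
  also have "\<dots> = a" using u v a h by (metis aI aA aC clA)
  finally show "add u a = a \<and> add v a = a" using 1 by simp
next
  assume "add u a = a \<and> add v a = a"
  thus "add (add u v) a = a" using u v a by (simp add: aA)
qed

lemma LZ:
  assumes H: "\<And>\<theta>. equiv R \<theta> \<Longrightarrow> (\<forall>a b c d. (a,b)\<in>\<theta> \<longrightarrow> (c,d)\<in>\<theta> \<longrightarrow> (add a c, add b d)\<in>\<theta>)
     \<Longrightarrow> (\<forall>a b c d. (a,b)\<in>\<theta> \<longrightarrow> (c,d)\<in>\<theta> \<longrightarrow> (mul a c, mul b d)\<in>\<theta>)"
  shows False
proof -
  obtain x1 x2 x3 where x: "x1 \<in> R" "x2 \<in> R" "x3 \<in> R" "x1 \<noteq> x2" "x1 \<noteq> x3" "x2 \<noteq> x3"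
    using three_elems[OF fin card3] by blast
  obtain a y where ay: "a \<in> R" "y \<in> R" "add y a \<noteq> a"
  proof (cases "add x1 x2 = x2")
    case True
    hence "add x2 x1 \<noteq> x1" using x aC by metis
    thus ?thesis using that x by blast
  next
    case False thus ?thesis using that x by blast
  qed
  define \<theta> where "\<theta> = {(u,v). u \<in> R \<and> v \<in> R \<and> (add u a = a \<longleftrightarrow> add v a = a)}"
  have eq: "equiv R \<theta>" unfolding equiv_def refl_on_def sym_def trans_def \<theta>_def by auto
  have ca: "\<forall>p q c d. (p,q)\<in>\<theta> \<longrightarrow> (c,d)\<in>\<theta> \<longrightarrow> (add p c, add q d)\<in>\<theta>"
    unfolding \<theta>_def using below_add ay(1) by (auto simp: clA)
  have "semiring_congruence R add mul \<theta>"
    unfolding semiring_congruence_def using eq ca H[OF eq ca] by blast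
  hence "\<theta> = Id_on R \<or> \<theta> = R \<times> R" by (rule simp_cong)
  moreover have "(a, y) \<notin> \<theta>" using ay aI by (auto simp: \<theta>_def)
  moreover have "\<exists>u v. u \<noteq> v \<and> (u, v) \<in> \<theta>"
    using x unfolding \<theta>_def by (cases "add x1 a = a"; cases "add x2 a = a"; cases "add x3 a = a"; blast)
  ultimately show False using ay by auto
qed

lemma not_left_const:
  assumes H: "\<forall>a\<in>R. \<forall>b\<in>R. \<forall>c\<in>R. mul a c = mul b c"
  shows False
proof -
  obtain e where e: "e \<in> R" using sr by (auto simp: semiring_def)
  define g where "g c = mul e c" for c
  have gR: "c \<in> R \<Longrightarrow> g c \<in> R" for c using e by (simp add: g_def clM)
  have mg: "a \<in> R \<Longrightarrow> c \<in> R \<Longrightarrow> mul a c = g c" for a c unfolding g_def using H e by blast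
  have gg: "c \<in> R \<Longrightarrow> g (g c) = g c" for c
  proof -
    assume c: "c \<in> R"
    have "g (g c) = mul (mul e e) c" unfolding g_def using mA[OF e e c] by simp
    also have "\<dots> = g c" using mg[OF clM[OF e e] c] .
    finally show ?thesis .
  qed
  define \<theta> where "\<theta> = {(u,v). u \<in> R \<and> v \<in> R \<and> g u = g v}"
  have eq: "equiv R \<theta>" unfolding equiv_def refl_on_def sym_def trans_def \<theta>_def by auto
  have "semiring_congruence R add mul \<theta>"
    unfolding semiring_congruence_def
  proof (intro conjI eq allI impI)
    fix a b c d assume ab: "(a,b)\<in>\<theta>" and cd: "(c,d)\<in>\<theta>"
    show "(add a c, add b d) \<in> \<theta>" using ab cd e unfolding \<theta>_def by (auto simp: g_def dL clA)
    show "(mul a c, mul b d) \<in> \<theta>" using ab cd unfolding \<theta>_def by (auto simp: mg gR gg clM)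
  qed
  hence "\<theta> = Id_on R \<or> \<theta> = R \<times> R" by (rule simp_cong)
  thus False
  proof
    assume "\<theta> = Id_on R"
    hence "c \<in> R \<Longrightarrow> g c = c" for c
    proof -
      assume I: "\<theta> = Id_on R" and c: "c \<in> R"
      have "(g c, c) \<in> \<theta>" using gg[OF c] gR[OF c] c by (simp add: \<theta>_def)
      thus ?thesis using I by auto
    qed
    hence m: "a \<in> R \<Longrightarrow> c \<in> R \<Longrightarrow> mul a c = c" for a c using mg by simp
    show False
    proof (rule LZ)
      fix \<theta>' assume eq': "equiv R \<theta>'"
      show "\<forall>a b c d. (a,b)\<in>\<theta>' \<longrightarrow> (c,d)\<in>\<theta>' \<longrightarrow> (mul a c, mul b d)\<in>\<theta>'"
      proof (intro allI impI)
        fix a b c d assume ab: "(a,b)\<in>\<theta>'" and cd: "(c,d)\<in>\<theta>'"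
        have "a \<in> R" "b \<in> R" "c \<in> R" "d \<in> R" using ab cd eq' by (auto simp: equiv_def refl_on_def)
        thus "(mul a c, mul b d)\<in>\<theta>'" using m ab cd by simp
      qed
    qed
  next
    assume "\<theta> = R \<times> R"
    hence "c \<in> R \<Longrightarrow> g c = g e" for c
    proof -
      assume I: "\<theta> = R \<times> R" and c: "c \<in> R"
      have "(c, e) \<in> \<theta>" using I c e by simp
      thus ?thesis by (simp add: \<theta>_def)
    qed
    hence m: "a \<in> R \<Longrightarrow> c \<in> R \<Longrightarrow> mul a c = g e" for a c using mg by simp
    show False
    proof (rule LZ)
      fix \<theta>' assume eq': "equiv R \<theta>'"
      show "\<forall>a b c d. (a,b)\<in>\<theta>' \<longrightarrow> (c,d)\<in>\<theta>' \<longrightarrow> (mul a c, mul b d)\<in>\<theta>'"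
      proof (intro allI impI)
        fix a b c d assume ab: "(a,b)\<in>\<theta>'" and cd: "(c,d)\<in>\<theta>'"
        have "a \<in> R" "b \<in> R" "c \<in> R" "d \<in> R" using ab cd eq' by (auto simp: equiv_def refl_on_def)
        moreover have "(g e, g e) \<in> \<theta>'" using gR[OF e] eq' by (auto simp: equiv_def refl_on_def)
        ultimately show "(mul a c, mul b d)\<in>\<theta>'" using m by simp
      qed
    qed
  qed
qed

lemma not_right_const:
  assumes H: "\<forall>a\<in>R. \<forall>b\<in>R. \<forall>c\<in>R. mul a b = mul a c"
  shows False
proof -
  obtain e where e: "e \<in> R" using sr by (auto simp: semiring_def)
  define g where "g c = mul c e" for c
  have gR: "c \<in> R \<Longrightarrow> g c \<in> R" for c using e by (simp add: g_def clM)
  have mg: "a \<in> R \<Longrightarrow> c \<in> R \<Longrightarrow> mul a c = g a" for a c unfolding g_def using H e by blast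
  have gg: "c \<in> R \<Longrightarrow> g (g c) = g c" for c
  proof -
    assume c: "c \<in> R"
    have "g (g c) = mul c (mul e e)" unfolding g_def using mA[OF c e e] by simp
    also have "\<dots> = g c" using mg[OF c clM[OF e e]] .
    finally show ?thesis .
  qed
  define \<theta> where "\<theta> = {(u,v). u \<in> R \<and> v \<in> R \<and> g u = g v}"
  have eq: "equiv R \<theta>" unfolding equiv_def refl_on_def sym_def trans_def \<theta>_def by auto
  have "semiring_congruence R add mul \<theta>"
    unfolding semiring_congruence_def
  proof (intro conjI eq allI impI)
    fix a b c d assume ab: "(a,b)\<in>\<theta>" and cd: "(c,d)\<in>\<theta>"
    show "(add a c, add b d) \<in> \<theta>" using ab cd e unfolding \<theta>_def by (auto simp: g_def dR clA)
    show "(mul a c, mul b d) \<in> \<theta>" using ab cd unfolding \<theta>_def by (auto simp: mg gR gg clM)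
  qed
  hence "\<theta> = Id_on R \<or> \<theta> = R \<times> R" by (rule simp_cong)
  thus False
  proof
    assume "\<theta> = Id_on R"
    hence "c \<in> R \<Longrightarrow> g c = c" for c
    proof -
      assume I: "\<theta> = Id_on R" and c: "c \<in> R"
      have "(g c, c) \<in> \<theta>" using gg[OF c] gR[OF c] c by (simp add: \<theta>_def)
      thus ?thesis using I by auto
    qed
    hence m: "a \<in> R \<Longrightarrow> c \<in> R \<Longrightarrow> mul a c = a" for a c using mg by simp
    show False
    proof (rule LZ)
      fix \<theta>' assume eq': "equiv R \<theta>'"
      show "\<forall>a b c d. (a,b)\<in>\<theta>' \<longrightarrow> (c,d)\<in>\<theta>' \<longrightarrow> (mul a c, mul b d)\<in>\<theta>'"
      proof (intro allI impI)
        fix a b c d assume ab: "(a,b)\<in>\<theta>'" and cd: "(c,d)\<in>\<theta>'"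
        have "a \<in> R" "b \<in> R" "c \<in> R" "d \<in> R" using ab cd eq' by (auto simp: equiv_def refl_on_def)
        thus "(mul a c, mul b d)\<in>\<theta>'" using m ab cd by simp
      qed
    qed
  next
    assume "\<theta> = R \<times> R"
    hence "c \<in> R \<Longrightarrow> g c = g e" for c
    proof -
      assume I: "\<theta> = R \<times> R" and c: "c \<in> R"
      have "(c, e) \<in> \<theta>" using I c e by simp
      thus ?thesis by (simp add: \<theta>_def)
    qed
    hence m: "a \<in> R \<Longrightarrow> c \<in> R \<Longrightarrow> mul a c = g e" for a c using mg by simp
    show False
    proof (rule LZ)
      fix \<theta>' assume eq': "equiv R \<theta>'"
      show "\<forall>a b c d. (a,b)\<in>\<theta>' \<longrightarrow> (c,d)\<in>\<theta>' \<longrightarrow> (mul a c, mul b d)\<in>\<theta>'"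
      proof (intro allI impI)
        fix a b c d assume ab: "(a,b)\<in>\<theta>'" and cd: "(c,d)\<in>\<theta>'"
        have "a \<in> R" "b \<in> R" "c \<in> R" "d \<in> R" using ab cd eq' by (auto simp: equiv_def refl_on_def)
        moreover have "(g e, g e) \<in> \<theta>'" using gR[OF e] eq' by (auto simp: equiv_def refl_on_def)
        ultimately show "(mul a c, mul b d)\<in>\<theta>'" using m by simp
      qed
    qed
  qed
qed

end



context
  fixes R :: "'a set" and add mul :: "'a \<Rightarrow> 'a \<Rightarrow> 'a"
  assumes fin: "finite R" and simple: "simple_semiring R add mul"
    and idem: "add_idempotent R add" and card3: "card R > 2"
begin

lemma R_module: "semimodule R add mul R add mul"
proof -
  have sr: "semiring R add mul" using simple by (simp add: simple_semiring_def)
  show ?thesis using sr unfolding semiring_def semimodule_def by (intro conjI; (elim conjE)?; simp)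
qed

lemma R_nq: "\<not> quasitrivial R R mul"
  using not_left_const[OF fin simple idem card3] unfolding quasitrivial_def by blast

lemma main_exists:
  "\<exists>(M :: nat set) (madd :: nat \<Rightarrow> nat \<Rightarrow> nat) (act :: 'a \<Rightarrow> nat \<Rightarrow> nat).
           finite M \<and> semimodule R add mul M madd act \<and>
           idempotent_semimodule M madd \<and> irreducible_semimodule R M madd act"
proof -
  define P where "P M madd act \<longleftrightarrow> finite M \<and> semimodule R add mul M madd act \<and>
     idempotent_semimodule M madd \<and> \<not> quasitrivial R M act" for M :: "nat set" and madd act
  define Q where "Q n \<longleftrightarrow> (\<exists>M madd act. P M madd act \<and> card M = n)" for n
  have "\<exists>n. Q n"
  proof -
    obtain B :: "nat set" and madd' act' where "finite B" "card B = card R"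
      "semimodule R add mul B madd' act'"
      "idempotent_semimodule R add \<longrightarrow> idempotent_semimodule B madd'"
      "quasitrivial R B act' \<longleftrightarrow> quasitrivial R R mul"
      using transport_nat[OF fin R_module] by blast
    moreover have "idempotent_semimodule R add" using idem
      by (simp add: idempotent_semimodule_def add_idempotent_def)
    ultimately have "P B madd' act'" using R_nq by (simp add: P_def)
    thus ?thesis unfolding Q_def by blast
  qed
  define n where "n = (LEAST n. Q n)"
  have "Q n" unfolding n_def using \<open>\<exists>n. Q n\<close> by (rule LeastI_ex)
  then obtain M madd act where PM: "P M madd act" and cM: "card M = n" unfolding Q_def by blast
  have minimal: "P M' madd' act' \<Longrightarrow> card M \<le> card M'" for M' madd' act'
    unfolding cM n_def by (rule Least_le) (auto simp: Q_def)
  have fM: "finite M" and sm: "semimodule R add mul M madd act"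
    and idm: "idempotent_semimodule M madd" and nq: "\<not> quasitrivial R M act"
    using PM by (auto simp: P_def)
  from sm have Mne: "M \<noteq> {}" and c1: "\<And>x y. x\<in>M \<Longrightarrow> y\<in>M \<Longrightarrow> madd x y \<in> M"
    and c4: "\<And>r x. r\<in>R \<Longrightarrow> x\<in>M \<Longrightarrow> act r x \<in> M"
    and c5: "\<And>r s x. r\<in>R \<Longrightarrow> s\<in>R \<Longrightarrow> x\<in>M \<Longrightarrow> act r (act s x) = act (mul r s) x"
    and c6: "\<And>r s x. r\<in>R \<Longrightarrow> s\<in>R \<Longrightarrow> x\<in>M \<Longrightarrow> act (add r s) x = madd (act r x) (act s x)"
    and c7: "\<And>r x y. r\<in>R \<Longrightarrow> x\<in>M \<Longrightarrow> y\<in>M \<Longrightarrow> act r (madd x y) = madd (act r x) (act r y)"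
    unfolding semimodule_def by auto
  note clA = clA[OF fin simple idem card3] and clM = clM[OF fin simple idem card3]

  have faithful: "r = s" if r: "r \<in> R" and s: "s \<in> R" and H: "\<forall>x\<in>M. act r x = act s x" for r s
  proof -
    define \<theta> where "\<theta> = {(r,s). r \<in> R \<and> s \<in> R \<and> (\<forall>x\<in>M. act r x = act s x)}"
    have eq: "equiv R \<theta>" unfolding equiv_def refl_on_def sym_def trans_def \<theta>_def by auto
    have "semiring_congruence R add mul \<theta>"
      unfolding semiring_congruence_def
    proof (intro conjI eq allI impI)
      fix a b c d assume ab: "(a,b)\<in>\<theta>" and cd: "(c,d)\<in>\<theta>"
      hence R4: "a \<in> R" "b \<in> R" "c \<in> R" "d \<in> R" and e1: "\<forall>x\<in>M. act a x = act b x"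
        and e2: "\<forall>x\<in>M. act c x = act d x" by (auto simp: \<theta>_def)
      show "(add a c, add b d) \<in> \<theta>" using R4 e1 e2 by (simp add: \<theta>_def clA c6)
      have "act (mul a c) x = act (mul b d) x" if x: "x \<in> M" for x
      proof -
        have "act (mul a c) x = act a (act c x)" using c5 R4 x by simp
        also have "\<dots> = act b (act d x)" using e1 e2 c4 R4 x by simp
        also have "\<dots> = act (mul b d) x" using c5 R4 x by simp
        finally show ?thesis .
      qed
      thus "(mul a c, mul b d) \<in> \<theta>" using R4 by (simp add: \<theta>_def clM)
    qed
    hence "\<theta> = Id_on R \<or> \<theta> = R \<times> R" by (rule simp_cong[OF fin simple idem card3])
    moreover have "\<theta> \<noteq> R \<times> R"
    proof
      assume "\<theta> = R \<times> R"
      hence "quasitrivial R M act" unfolding quasitrivial_def \<theta>_def by (auto simp: set_eq_iff)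
      thus False using nq by simp
    qed
    ultimately have "\<theta> = Id_on R" by simp
    moreover have "(r, s) \<in> \<theta>" using r s H by (simp add: \<theta>_def)
    ultimately show "r = s" by auto
  qed

  have subq: "quasitrivial R N act" if sub: "subsemimodule R M madd act N" and ps: "N \<subset> M" and ne: "N \<noteq> {}" for N
  proof (rule ccontr)
    assume nqN: "\<not> quasitrivial R N act"
    have "P N madd act" unfolding P_def using nqN sub_module[OF sm sub ne] fM ps idm
      by (auto simp: idempotent_semimodule_def intro: finite_subset)
    hence "card M \<le> card N" by (rule minimal)
    moreover have "card N < card M" using psubset_card_mono[OF fM ps] .
    ultimately show False by simp
  qed

  have quotq: "\<forall>r\<in>R. \<forall>s\<in>R. \<forall>x\<in>M. (act r x, act s x) \<in> \<theta>"
    if cg: "semimodule_congruence R M madd act \<theta>" and ne: "\<theta> \<noteq> Id_on M" for \<theta>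
  proof -
    have eq: "equiv M \<theta>" using cg by (simp add: semimodule_congruence_def)
    have clR: "\<forall>r\<in>R. \<forall>s\<in>R. add r s \<in> R \<and> mul r s \<in> R" using clA clM by blast
    note qm = quotient_module[OF sm idm cg clR]
    have fQ: "finite (M//\<theta>)" using fM eq by (auto intro: finite_quotient simp: equiv_def refl_on_def)
    have cQ: "card (M//\<theta>) < card M" by (rule quotient_card_less[OF fM eq ne])
    obtain B :: "nat set" and madd' act' where B: "finite B" "card B = card (M//\<theta>)"
      "semimodule R add mul B madd' act'" "idempotent_semimodule B madd'"
      and qiff: "quasitrivial R B act' \<longleftrightarrow> quasitrivial R (M//\<theta>) (\<lambda>r X. \<theta>``{act r (SOME x. x \<in> X)})"
      using transport_nat[OF fQ qm(1)] qm(2) by blast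
    have "\<not> P B madd' act'"
    proof
      assume "P B madd' act'"
      hence "card M \<le> card B" by (rule minimal)
      thus False using B(2) cQ by simp
    qed
    hence "quasitrivial R B act'" using B by (simp add: P_def)
    hence "quasitrivial R (M//\<theta>) (\<lambda>r X. \<theta>``{act r (SOME x. x \<in> X)})" using qiff by simp
    thus ?thesis by (rule qm(3))
  qed

  have cyc: "\<exists>x0\<in>M. \<forall>y\<in>M. \<exists>r\<in>R. y = act r x0"
  proof (rule ccontr)
    assume nc: "\<not> ?thesis"
    have lc: "mul t r = mul u r" if t: "t \<in> R" and u: "u \<in> R" and r: "r \<in> R" for t u r
    proof (rule faithful[OF clM[OF t r] clM[OF u r]], rule ballI)
      fix x assume x: "x \<in> M"
      define N where "N = (\<lambda>r. act r x) ` R"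
      have sub: "subsemimodule R M madd act N" unfolding subsemimodule_def N_def
      proof (intro conjI ballI subsetI)
        fix y assume "y \<in> (\<lambda>r. act r x) ` R" thus "y \<in> M" using c4 x by auto
      next
        fix y z assume "y \<in> (\<lambda>r. act r x) ` R" "z \<in> (\<lambda>r. act r x) ` R"
        then obtain a b where "a \<in> R" "b \<in> R" "y = act a x" "z = act b x" by auto
        thus "madd y z \<in> (\<lambda>r. act r x) ` R" using c6 x clA by (auto intro!: image_eqI[of _ _ "add a b"])
      next
        fix s y assume "s \<in> R" "y \<in> (\<lambda>r. act r x) ` R"
        then obtain a where "a \<in> R" "y = act a x" by auto
        thus "act s y \<in> (\<lambda>r. act r x) ` R" using c5 x clM \<open>s \<in> R\<close>
          by (auto intro!: image_eqI[of _ _ "mul s a"])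
      qed
      have "N \<subseteq> M" using sub by (simp add: subsemimodule_def)
      moreover have "N \<noteq> M" using nc x unfolding N_def by blast
      moreover have "N \<noteq> {}" using r unfolding N_def by blast
      ultimately have qN: "quasitrivial R N act" using subq sub by blast
      have "act r x \<in> N" using r unfolding N_def by blast
      hence "act t (act r x) = act u (act r x)" using qN t u unfolding quasitrivial_def by blast
      thus "act (mul t r) x = act (mul u r) x" using c5 t u r x by simp
    qed
    show False using not_left_const[OF fin simple idem card3] lc by blast
  qed

  have ann: "x = y" if x: "x \<in> M" and y: "y \<in> M" and H: "\<forall>r\<in>R. act r x = act r y" for x y
  proof -
    define \<psi> where "\<psi> = {(x,y). x \<in> M \<and> y \<in> M \<and> (\<forall>r\<in>R. act r x = act r y)}"
    have eq: "equiv M \<psi>" unfolding equiv_def refl_on_def sym_def trans_def \<psi>_def by auto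
    have cg: "semimodule_congruence R M madd act \<psi>"
      unfolding semimodule_congruence_def
    proof (intro conjI eq allI impI ballI)
      fix a b c d assume "(a,b)\<in>\<psi>" "(c,d)\<in>\<psi>"
      thus "(madd a c, madd b d) \<in> \<psi>" by (auto simp: \<psi>_def c1 c7)
    next
      fix r a b assume r: "r \<in> R" and ab: "(a,b)\<in>\<psi>"
      thus "(act r a, act r b) \<in> \<psi>" by (auto simp: \<psi>_def c4 c5 clM)
    qed
    have "\<psi> = Id_on M"
    proof (rule ccontr)
      assume ne: "\<psi> \<noteq> Id_on M"
      have rc: "mul t r = mul t s" if t: "t \<in> R" and r: "r \<in> R" and s: "s \<in> R" for t r s
      proof (rule faithful[OF clM[OF t r] clM[OF t s]], rule ballI)
        fix z assume z: "z \<in> M"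
        have "(act r z, act s z) \<in> \<psi>" using quotq[OF cg ne] r s z by blast
        hence "act t (act r z) = act t (act s z)" using t by (simp add: \<psi>_def)
        thus "act (mul t r) z = act (mul t s) z" using c5 t r s z by simp
      qed
      show False using not_right_const[OF fin simple idem card3] rc by blast
    qed
    moreover have "(x, y) \<in> \<psi>" using x y H by (simp add: \<psi>_def)
    ultimately show ?thesis by auto
  qed

  have subirr: "sub_irreducible R M madd act"
    unfolding sub_irreducible_def
  proof (intro conjI nq allI impI)
    fix N assume "subsemimodule R M madd act N \<and> N \<subset> M"
    hence sub: "subsemimodule R M madd act N" and ps: "N \<subset> M" by auto
    show "id_quasitrivial R N act"
    proof (cases "N = {}")
      case True thus ?thesis by (simp add: id_quasitrivial_def)
    next
      case False
      hence qN: "quasitrivial R N act" using subq sub ps by blast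
      have NM: "N \<subseteq> M" and NR: "\<And>r n. r \<in> R \<Longrightarrow> n \<in> N \<Longrightarrow> act r n \<in> N"
        using sub by (auto simp: subsemimodule_def)
      show ?thesis unfolding id_quasitrivial_def
      proof (intro ballI)
        fix r n assume r: "r \<in> R" and n: "n \<in> N"
        have "\<forall>t\<in>R. act t (act r n) = act t n"
        proof
          fix t assume t: "t \<in> R"
          have "act t (act r n) = act (mul t r) n" using c5 t r n NM by auto
          also have "\<dots> = act t n" using qN clM[OF t r] t n unfolding quasitrivial_def by blast
          finally show "act t (act r n) = act t n" .
        qed
        thus "act r n = n" using ann NR[OF r n] n NM by blast
      qed
    qed
  qed

  have quotirr: "quotient_irreducible R M madd act"
    unfolding quotient_irreducible_def
  proof (intro conjI nq allI impI)
    fix \<theta> assume cg: "semimodule_congruence R M madd act \<theta>"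
    show "\<theta> = Id_on M \<or> \<theta> = M \<times> M"
    proof (cases "\<theta> = Id_on M")
      case True thus ?thesis by simp
    next
      case False
      have eq: "equiv M \<theta>" using cg by (simp add: semimodule_congruence_def)
      have all: "\<forall>r\<in>R. \<forall>s\<in>R. \<forall>x\<in>M. (act r x, act s x) \<in> \<theta>" using quotq[OF cg False] .
      obtain x0 where x0: "x0 \<in> M" and gen: "\<forall>y\<in>M. \<exists>r\<in>R. y = act r x0" using cyc by blast
      have "M \<times> M \<subseteq> \<theta>"
      proof safe
        fix y z assume "y \<in> M" "z \<in> M"
        then obtain a b where "a \<in> R" "b \<in> R" "y = act a x0" "z = act b x0" using gen by blast
        thus "(y, z) \<in> \<theta>" using all x0 by blast
      qed
      moreover have "\<theta> \<subseteq> M \<times> M" using eq by (simp add: equiv_def refl_on_def)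
      ultimately show ?thesis by blast
    qed
  qed

  show ?thesis using fM sm idm subirr quotirr
    unfolding irreducible_semimodule_def by blast
qed

end

theorem proposition2p17:
  fixes R :: "'a set" and add mul :: "'a \<Rightarrow> 'a \<Rightarrow> 'a"
  assumes "finite R"
    and "simple_semiring R add mul"
    and "add_idempotent R add"
    and "card R > 2"
  shows "\<exists>(M :: nat set) (madd :: nat \<Rightarrow> nat \<Rightarrow> nat) (act :: 'a \<Rightarrow> nat \<Rightarrow> nat).
           finite M \<and> semimodule R add mul M madd act \<and>
           idempotent_semimodule M madd \<and> irreducible_semimodule R M madd act"
    by (rule main_exists[OF assms])

end
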